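(* Let $p\ge 1$ and let $y_1,y_2\in\mathbb{R}^p$ be two distinct points with $d=\|y_1-y_2\|_2>0$. Let $\lambda>0$, $\delta>0$ and put $\eta=\lambda\delta$. Consider the iterates $(\theta_1^{(t)},\theta_2^{(t)})_{t\ge 0}$ of the MM algorithm described in the context, started at $\theta_1^{(0)}=y_1$, $\theta_2^{(0)}=y_2$. Let $\phi\in(0,1)$. (i) If $\eta>d$ and $$\lambda=\frac{2\phi\,\eta\, d}{(1-\phi)(\eta-d)},$$ then $\|\theta_1^{(1)}-\theta_2^{(0)}\|_2=(1-\phi)\,\|\theta_1^{(0)}-\theta_2^{(0)}\|_2$. (ii) If $\eta\le d$, then $\theta_i^{(t)}=y_i$ for all $t\ge 1$ and $i=1,2$.
   Context: The minimax concave penalty (MCP) with parameters $\lambda>0$, $\delta>0$ is $\rho(t)=\int_0^t(1-\frac{x}{\lambda\delta})_+\,dx$ for $t\ge 0$, so $\rho'(t)=(1-t/(\lambda\delta))_+$. For two observations $y_1,y_2$ one minimizes $\ell(\theta_1,\theta_2)=\|y_1-\theta_1\|_2^2+\|y_2-\theta_2\|_2^2+\lambda\rho(\|\theta_1-\theta_2\|_2)$ by the following blockwise MM (majorization–minimization) iteration, defined as long as the two current centers are distinct. Given $(\theta_1^{(t)},\theta_2^{(t)})$, first set $$w_1^{(t)}=\frac{\bigl(1-\|\theta_1^{(t)}-\theta_2^{(t)}\|_2/(\lambda\delta)\bigr)_+}{2\|\theta_1^{(t)}-\theta_2^{(t)}\|_2},\qquad \theta_1^{(t+1)}=\frac{y_1+\lambda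 w_1^{(t)}\theta_2^{(t)}}{1+\lambda w_1^{(t)}},$$ and then, with $\theta_1$ fixed at its new value, $$w_2^{(t)}=\frac{\bigl(1-\|\theta_2^{(t)}-\theta_1^{(t+1)}\|_2/(\lambda\delta)\bigr)_+}{2\|\theta_2^{(t)}-\theta_1^{(t+1)}\|_2},\qquad \theta_2^{(t+1)}=\frac{y_2+\lambda w_2^{(t)}\theta_1^{(t+1)}}{1+\lambda w_2^{(t)}}.$$ *)

theory Defs
  imports "HOL-Analysis.Analysis"
begin

definition mcp_weight :: "real \<Rightarrow> real \<Rightarrow> real \<Rightarrow> real" where
  "mcp_weight lam del r = max 0 (1 - r / (lam * del)) / (2 * r)"

definition mm_step :: "real \<Rightarrow> real \<Rightarrow> real ^ 'n \<Rightarrow> real ^ 'n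
    \<Rightarrow> ((real ^ 'n) \<times> (real ^ 'n)) \<Rightarrow> ((real ^ 'n) \<times> (real ^ 'n))" where
  "mm_step lam del y1 y2 th =
     (let a = fst th; b = snd th;
          w1 = mcp_weight lam del (norm (a - b));
          a' = (1 / (1 + lam * w1)) *\<^sub>R (y1 + (lam * w1) *\<^sub>R b);
          w2 = mcp_weight lam del (norm (b - a'));
          b' = (1 / (1 + lam * w2)) *\<^sub>R (y2 + (lam * w2) *\<^sub>R a')
      in (a', b'))"

fun mm_iter :: "real \<Rightarrow> real \<Rightarrow> real ^ 'n \<Rightarrow> real ^ 'n \<Rightarrow> nat
    \<Rightarrow> ((real ^ 'n) \<times> (real ^ 'n))" where
  "mm_iter lam del y1 y2 0 = (y1, y2)"
| "mm_iter lam del y1 y2 (Suc t) = mm_step lam del y1 y2 (mm_iter lam del y1 y2 t)"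

end

theory Submission
  imports Defs
begin

lemma fix_step:
  fixes y1 y2 :: "real ^ 'n"
  assumes "lam * del \<le> norm (y1 - y2)" "lam > 0" "del > 0"
  shows "mm_step lam del y1 y2 (y1, y2) = (y1, y2)"
proof -
  have w: "mcp_weight lam del (norm (y1 - y2)) = 0"
    using assms by (simp add: mcp_weight_def)
  have w2: "mcp_weight lam del (norm (y2 - y1)) = 0"
    using w by (simp add: norm_minus_commute)
  show ?thesis using w w2 by (simp add: mm_step_def Let_def)
qed

lemma iter_fix:
  fixes y1 y2 :: "real ^ 'n"
  assumes "lam * del \<le> norm (y1 - y2)" "lam > 0" "del > 0"
  shows "mm_iter lam del y1 y2 t = (y1, y2)"
  by (induction t) (simp_all add: fix_step[OF assms])

theorem lemma1:
  fixes y1 y2 :: "real ^ 'n" and lam del phi :: real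
  assumes "y1 \<noteq> y2" and "lam > 0" and "del > 0" and "0 < phi" and "phi < 1"
  shows "(lam * del > norm (y1 - y2) \<and>
            lam = 2 * phi * (lam * del) * norm (y1 - y2)
                  / ((1 - phi) * (lam * del - norm (y1 - y2)))
          \<longrightarrow> norm (fst (mm_iter lam del y1 y2 1) - snd (mm_iter lam del y1 y2 0))
              = (1 - phi) * norm (fst (mm_iter lam del y1 y2 0) - snd (mm_iter lam del y1 y2 0)))
       \<and> (lam * del \<le> norm (y1 - y2) \<longrightarrow>
            (\<forall>t\<ge>1. fst (mm_iter lam del y1 y2 t) = y1 \<and> snd (mm_iter lam del y1 y2 t) = y2))"
proof (intro conjI impI allI)
  fix t :: nat
  assume "lam * del \<le> norm (y1 - y2)"
  from iter_fix[OF this assms(2,3)]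
  show "fst (mm_iter lam del y1 y2 t) = y1" "snd (mm_iter lam del y1 y2 t) = y2" by auto
next
  assume h: "lam * del > norm (y1 - y2) \<and>
            lam = 2 * phi * (lam * del) * norm (y1 - y2)
                  / ((1 - phi) * (lam * del - norm (y1 - y2)))"
  define d where "d = norm (y1 - y2)"
  define e where "e = lam * del"
  have dpos: "d > 0" using assms(1) by (simp add: d_def)
  have epos: "e > 0" using assms by (simp add: e_def)
  have ed: "e > d" and lh: "lam = 2 * phi * e * d / ((1 - phi) * (e - d))"
    using h by (auto simp: d_def e_def)
  define w where "w = mcp_weight lam del d"
  have wv: "w = (1 - d / e) / (2 * d)"
    using ed epos by (simp add: w_def mcp_weight_def e_def[symmetric])
  have lw: "lam * w = phi / (1 - phi)"
  proof -
    have "lam * w = 2 * phi * e * d / ((1 - phi) * (e - d)) * ((e - d) / e / (2 * d))"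
      using lh wv epos by (simp add: field_simps)
    also have "\<dots> = (phi / (1 - phi)) * ((e - d) * (2 * e * d)) / ((e - d) * (2 * e * d))"
      by (simp add: field_simps)
    also have "\<dots> = phi / (1 - phi)"
      using epos dpos ed by simp
    finally show ?thesis .
  qed
  have a': "fst (mm_iter lam del y1 y2 1) = (1 / (1 + lam * w)) *\<^sub>R (y1 + (lam * w) *\<^sub>R y2)"
    by (simp add: mm_step_def Let_def w_def d_def)
  have one: "1 + lam * w = 1 / (1 - phi)" proof -
    have "1 + phi / (1 - phi) = 1 / (1 - phi)" using assms(5) by (simp add: field_simps)
    then show ?thesis using lw by simp
  qed
  have "fst (mm_iter lam del y1 y2 1) - y2 = (1 / (1 + lam * w)) *\<^sub>R (y1 - y2)"
  proof -
    have ne: "1 + lam * w \<noteq> 0" using one assms(5) by simp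
    define c where "c = 1 + lam * w"
    have "(1 / c) *\<^sub>R (y1 + (lam * w) *\<^sub>R y2) - y2
        = (1 / c) *\<^sub>R (y1 + (lam * w) *\<^sub>R y2 - c *\<^sub>R y2)"
      using ne by (simp add: c_def scaleR_diff_right)
    also have "y1 + (lam * w) *\<^sub>R y2 - c *\<^sub>R y2 = y1 - y2"
      by (simp add: c_def algebra_simps)
    finally show ?thesis unfolding a' c_def .
  qed
  then show "norm (fst (mm_iter lam del y1 y2 1) - snd (mm_iter lam del y1 y2 0))
              = (1 - phi) * norm (fst (mm_iter lam del y1 y2 0) - snd (mm_iter lam del y1 y2 0))"
    using one assms(5) by simp
qed

end
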